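(* Let $K$ be an infinite commutative domain, let $n\ge0$, and let $W_n$ be the $K$-submodule of the free associative algebra $K\langle x,y\rangle$ with basis the monomials $y^ixy^j$, $i+j=n$. Let $\alpha\in W_n$. (i) $\Delta\alpha=0$ if and only if $\alpha$ is a $K$-scalar multiple of $e_n$. (ii) If $\operatorname{char}K=0$ then $\partial\alpha/\partial y=0$ if and only if $\alpha$ is a $K$-scalar multiple of $e_n$.
   Context: Let $V$ be the $K$-submodule of $K\langle x,y\rangle$ spanned by all monomials $y^ixy^j$, $i,j\ge0$. The difference operator $\Delta$ on $V$ is $\Delta\alpha(x,y)=\alpha(x,y+1)-\alpha(x,y)$ (computed in the unital free algebra). $\partial/\partial y$ denotes the unique $K$-derivation of $K\langle x,y\rangle$ sending $y\mapsto1$ and $x\mapsto0$. $e_0=x$, $e_{j+1}=e_jy-ye_j$, so $e_n=\sum_{i=0}^n(-1)^i\binom ni y^ixy^{n-i}$. *)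

theory Defs
  imports Main
begin

text \<open>The free associative unital algebra K<x,y> is modelled as coefficient functions
on words over the alphabet {x,y}; a word is a bool list with True = x and False = y.
Elements of the algebra are the finitely supported such functions.\<close>

type_synonym 'k ncpoly = "bool list \<Rightarrow> 'k"

definition supp :: "'k::zero ncpoly \<Rightarrow> bool list set" where
  "supp p = {w. p w \<noteq> 0}"

definition nc_monom :: "bool list \<Rightarrow> 'k::{zero,one} ncpoly" where
  "nc_monom u = (\<lambda>w. if w = u then 1 else 0)"

definition nc_one :: "'k::{zero,one} ncpoly" where "nc_one = nc_monom []"
definition nc_x :: "'k::{zero,one} ncpoly" where "nc_x = nc_monom [True]"
definition nc_y :: "'k::{zero,one} ncpoly" where "nc_y = nc_monom [False]"

definition nc_add :: "'k::comm_ring_1 ncpoly \<Rightarrow> 'k ncpoly \<Rightarrow> 'k ncpoly" where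
  "nc_add p q = (\<lambda>w. p w + q w)"

definition nc_diff :: "'k::comm_ring_1 ncpoly \<Rightarrow> 'k ncpoly \<Rightarrow> 'k ncpoly" where
  "nc_diff p q = (\<lambda>w. p w - q w)"

definition nc_smult :: "'k::comm_ring_1 \<Rightarrow> 'k ncpoly \<Rightarrow> 'k ncpoly" where
  "nc_smult c p = (\<lambda>w. c * p w)"

definition nc_mult :: "'k::comm_ring_1 ncpoly \<Rightarrow> 'k ncpoly \<Rightarrow> 'k ncpoly" where
  "nc_mult p q = (\<lambda>w. \<Sum>i\<le>length w. p (take i w) * q (drop i w))"

definition nc_eval_word :: "(bool \<Rightarrow> 'k::comm_ring_1 ncpoly) \<Rightarrow> bool list \<Rightarrow> 'k ncpoly" where
  "nc_eval_word \<sigma> u = foldr (\<lambda>a acc. nc_mult (\<sigma> a) acc) u nc_one"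

definition nc_subst :: "(bool \<Rightarrow> 'k::comm_ring_1 ncpoly) \<Rightarrow> 'k ncpoly \<Rightarrow> 'k ncpoly" where
  "nc_subst \<sigma> p = (\<lambda>w. \<Sum>u\<in>supp p. p u * nc_eval_word \<sigma> u w)"

definition nc_Delta :: "'k::comm_ring_1 ncpoly \<Rightarrow> 'k ncpoly" where
  "nc_Delta p = nc_diff (nc_subst (\<lambda>a. if a then nc_x else nc_add nc_y nc_one) p) p"

text \<open>The K-derivation d/dy with y |-> 1, x |-> 0: on a word it is the sum, over all
occurrences of y, of the word with that occurrence deleted (Leibniz rule).\<close>
definition nc_dy_word :: "bool list \<Rightarrow> 'k::comm_ring_1 ncpoly" where
  "nc_dy_word u = (\<lambda>w. of_nat (card {i. i < length u \<and> u ! i = False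
                                   \<and> take i u @ drop (Suc i) u = w}))"

definition nc_dy :: "'k::comm_ring_1 ncpoly \<Rightarrow> 'k ncpoly" where
  "nc_dy p = (\<lambda>w. \<Sum>u\<in>supp p. p u * nc_dy_word u w)"

fun nc_e :: "nat \<Rightarrow> 'k::comm_ring_1 ncpoly" where
  "nc_e 0 = nc_x"
| "nc_e (Suc j) = nc_diff (nc_mult (nc_e j) nc_y) (nc_mult nc_y (nc_e j))"

definition W :: "nat \<Rightarrow> 'k::comm_ring_1 ncpoly set" where
  "W n = {p. \<forall>w. p w \<noteq> 0 \<longrightarrow>
               (\<exists>i j. i + j = n \<and> w = replicate i False @ [True] @ replicate j False)}"

end

theory Submission
  imports Defs
begin

definition mw :: "nat \<Rightarrow> nat \<Rightarrow> bool list" where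
  "mw i j = replicate i False @ True # replicate j False"

lemma rep_true_eq: "replicate i False @ True # xs = replicate k False @ True # ys \<Longrightarrow> i = k \<and> xs = ys"
proof (induction i arbitrary: k)
  case 0 then show ?case by (cases k) auto
next
  case (Suc i) then show ?case by (cases k) auto
qed

lemma mw_inj[simp]: "mw i j = mw k l \<longleftrightarrow> i = k \<and> j = l"
proof
  assume "mw i j = mw k l"
  then have "i = k \<and> replicate j False = replicate l False" unfolding mw_def by (rule rep_true_eq)
  then show "i = k \<and> j = l" by (metis length_replicate)
qed simp

lemma mw_ne[simp]: "mw i j \<noteq> []" by (simp add: mw_def)
lemma mw_Suc: "mw (Suc i) j = False # mw i j" by (simp add: mw_def)
lemma mw_0: "mw 0 j = True # replicate j False" by (simp add: mw_def)
lemma mw_snoc: "mw i (Suc j) = mw i j @ [False]" by (simp add: mw_def replicate_append_same)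
lemma hd_mw0: "hd (mw 0 j) = True" by (simp add: mw_def)
lemma last_mw0: "last (mw i 0) = True" by (simp add: mw_def)

lemma W_mw: "p \<in> W n \<Longrightarrow> p w \<noteq> 0 \<Longrightarrow> \<exists>i\<le>n. w = mw i (n - i)"
proof -
  assume a: "p \<in> W n" "p w \<noteq> 0"
  then obtain i j where "i + j = n" "w = replicate i False @ [True] @ replicate j False"
    unfolding W_def by blast
  then show ?thesis unfolding mw_def by (intro exI[of _ i]) auto
qed

lemma take_eq_single: "i \<le> length w \<Longrightarrow> take i w = [a] \<longleftrightarrow> (i = 1 \<and> w \<noteq> [] \<and> hd w = a)"
  by (cases w; cases i) auto

lemma mult_left_monom:
  "nc_mult (nc_monom [a]) p w = (if w \<noteq> [] \<and> hd w = a then p (tl w) else (0::'a::comm_ring_1))"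
proof -
  have "nc_mult (nc_monom [a]) p w = (\<Sum>i\<le>length w. if i = 1 then (if w \<noteq> [] \<and> hd w = a then p (tl w) else 0) else 0)"
    unfolding nc_mult_def nc_monom_def
    by (rule sum.cong) (auto simp: take_eq_single drop_Suc)
  also have "\<dots> = (if 1 \<le> length w then (if w \<noteq> [] \<and> hd w = a then p (tl w) else 0) else 0)"
    by simp
  also have "\<dots> = (if w \<noteq> [] \<and> hd w = a then p (tl w) else 0)"
    by (cases w) auto
  finally show ?thesis .
qed

lemma drop_snoc_single: "i \<le> length v + 1 \<Longrightarrow> drop i (v @ [b]) = [c] \<longleftrightarrow> (i = length v \<and> b = c)"
proof (cases "i \<le> length v")
  case True
  then show ?thesis by (auto simp: drop_append)
next
  case False
  assume "i \<le> length v + 1"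
  then have "i = length v + 1" using False by simp
  then show ?thesis by simp
qed

lemma mult_right_y:
  "nc_mult p nc_y w = (if w \<noteq> [] \<and> last w = False then p (butlast w) else (0::'a::comm_ring_1))"
proof (cases w rule: rev_cases)
  case Nil
  then show ?thesis by (simp add: nc_mult_def nc_y_def nc_monom_def)
next
  case (snoc v b)
  have "nc_mult p nc_y w = (\<Sum>i\<le>length (v @ [b]). if i = length v then (if b = False then p v else 0) else 0)"
    unfolding nc_mult_def nc_monom_def nc_y_def snoc
  proof (rule sum.cong[OF refl])
    fix i assume "i \<in> {..length (v @ [b])}"
    then have "i \<le> length v + 1" by simp
    from drop_snoc_single[OF this, of b False]
    show "p (take i (v @ [b])) * (if drop i (v @ [b]) = [False] then 1 else 0) =
        (if i = length v then if b = False then p v else 0 else 0)"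
      by (auto simp del: drop_append take_append simp: take_append)
  qed
  also have "\<dots> = (if b = False then p v else 0)" by simp
  finally show ?thesis using snoc by simp
qed

lemma mult_one_left: "nc_mult nc_one p w = (p w :: 'a::comm_ring_1)"
proof -
  have "nc_mult nc_one p w = (\<Sum>i\<le>length w. if i = 0 then p w else 0)"
    unfolding nc_mult_def nc_one_def nc_monom_def
    by (rule sum.cong) auto
  then show ?thesis by simp
qed

lemma mult_add_left: "nc_mult (nc_add q r) p w = nc_mult q p w + (nc_mult r p w :: 'a::comm_ring_1)"
  unfolding nc_mult_def nc_add_def by (simp add: distrib_right sum.distrib)

definition sig0 :: "bool \<Rightarrow> 'a::comm_ring_1 ncpoly" where
  "sig0 = (\<lambda>a. if a then nc_x else nc_add nc_y nc_one)"

lemma ev_Cons: "nc_eval_word s (a # u) = nc_mult (s a) (nc_eval_word s u)"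
  by (simp add: nc_eval_word_def)

lemma ev_False: "nc_eval_word sig0 (False # u) w =
   nc_eval_word sig0 u w + (if w \<noteq> [] \<and> hd w = False then nc_eval_word sig0 u (tl w) else (0::'a::comm_ring_1))"
  by (simp add: ev_Cons sig0_def mult_add_left mult_one_left nc_y_def mult_left_monom add.commute)

lemma ev_True: "nc_eval_word sig0 (True # u) w =
   (if w \<noteq> [] \<and> hd w = True then nc_eval_word sig0 u (tl w) else (0::'a::comm_ring_1))"
  by (simp add: ev_Cons sig0_def nc_x_def mult_left_monom)

lemma ev_rep: "nc_eval_word sig0 (replicate j False) w =
  (if w = replicate (length w) False then of_nat (j choose length w) else (0::'a::comm_ring_1))"
proof (induction j arbitrary: w)
  case 0
  then show ?case by (cases w) (auto simp: nc_eval_word_def nc_one_def nc_monom_def)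
next
  case (Suc j)
  show ?case
  proof (cases w)
    case Nil
    then show ?thesis using Suc by (simp add: ev_False)
  next
    case (Cons b v)
    then show ?thesis using Suc[of w] Suc[of v] by (cases b) (auto simp: ev_False)
  qed
qed

lemma ev_mwS: "nc_eval_word sig0 (mw (Suc i) j) w = nc_eval_word sig0 (mw i j) w + (if w \<noteq> [] \<and> hd w = False then nc_eval_word sig0 (mw i j) (tl w) else (0::'a::comm_ring_1))"
  by (simp only: mw_Suc ev_False)

lemma ev_mw: "nc_eval_word sig0 (mw i j) (mw k l) = of_nat (i choose k) * (of_nat (j choose l) :: 'a::comm_ring_1)"
proof (induction i arbitrary: k)
  case 0
  then show ?case
    by (cases k) (auto simp: mw_0 ev_True ev_rep mw_Suc)
next
  case (Suc i)
  note IH = Suc.IH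
  show ?case
  proof (cases k)
    case 0
    then show ?thesis using IH[of 0] by (simp add: ev_mwS hd_mw0)
  next
    case (Suc k')
    have "nc_eval_word sig0 (mw (Suc i) j) (mw k l) = nc_eval_word sig0 (mw i j) (mw k l) + (nc_eval_word sig0 (mw i j) (mw k' l) :: 'a)"
      unfolding ev_mwS using Suc by (simp add: mw_Suc)
    also have "\<dots> = of_nat (i choose k) * of_nat (j choose l) + of_nat (i choose k') * of_nat (j choose l)"
      unfolding IH[of k] IH[of k'] by (rule refl)
    also have "\<dots> = of_nat (Suc i choose k) * of_nat (j choose l)"
      using Suc by (simp add: algebra_simps)
    finally show ?thesis .
  qed
qed

lemma ev_nonmw: "(\<forall>k l. w \<noteq> mw k l) \<Longrightarrow> nc_eval_word sig0 (mw i j) w = (0 :: 'a::comm_ring_1)"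
proof (induction i arbitrary: w)
  case 0
  then show ?case
    apply (cases w)
     apply (auto simp: mw_0 ev_True ev_rep)
    by (metis mw_0 list.collapse list.sel(3))
next
  case (Suc i)
  show ?case
  proof (cases w)
    case Nil
    then show ?thesis using Suc by (simp add: mw_Suc ev_False)
  next
    case (Cons b v)
    have "\<forall>k l. v \<noteq> mw k l" if "b = False" using Suc.prems Cons that mw_Suc by metis
    then show ?thesis using Suc Cons by (cases b) (auto simp: mw_Suc ev_False)
  qed
qed

lemma sum_W:
  assumes "p \<in> W n"
  shows "(\<Sum>u\<in>supp p. p u * g u) = (\<Sum>i\<le>n. p (mw i (n-i)) * (g (mw i (n-i)) :: 'a::comm_ring_1))"
proof -
  let ?S = "(\<lambda>i. mw i (n-i)) ` {..n}"
  have sub: "supp p \<subseteq> ?S" using W_mw[OF assms] unfolding supp_def by auto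
  have "(\<Sum>u\<in>supp p. p u * g u) = (\<Sum>u\<in>?S. p u * g u)"
    by (rule sum.mono_neutral_left) (use sub in \<open>auto simp: supp_def\<close>)
  also have "\<dots> = (\<Sum>i\<le>n. p (mw i (n-i)) * g (mw i (n-i)))"
    by (subst sum.reindex) (auto simp: inj_on_def)
  finally show ?thesis .
qed

lemma del_left: "p < i \<Longrightarrow> mw i j ! p = False \<and> take p (mw i j) @ drop (Suc p) (mw i j) = mw (i-1) j"
  unfolding mw_def
  by (auto simp: nth_append take_append drop_append min_def replicate_add[symmetric])

lemma del_right: "q < j \<Longrightarrow> mw i j ! (i+1+q) = False \<and> take (i+1+q) (mw i j) @ drop (Suc (i+1+q)) (mw i j) = mw i (j-1)"
proof -
  assume q: "q < j"
  have r: "replicate j False = replicate q False @ False # replicate (j - Suc q) False"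
  proof -
    have "j = q + Suc (j - Suc q)" using q by simp
    then have "replicate j False = replicate q False @ replicate (Suc (j - Suc q)) False"
      by (metis replicate_add)
    then show ?thesis by simp
  qed
  have u: "mw i j = (replicate i False @ True # replicate q False) @ False # replicate (j-1-q) False"
    unfolding mw_def using r by simp
  have m: "mw i (j-1) = (replicate i False @ True # replicate q False) @ replicate (j-1-q) False"
    unfolding mw_def using q by (simp add: replicate_add[symmetric])
  show ?thesis unfolding m by (subst u, subst u, subst u) (simp add: nth_append)
qed

lemma len_mw: "length (mw i j) = i + 1 + j" by (simp add: mw_def)
lemma nth_mw_i: "mw i j ! i = True" by (simp add: mw_def nth_append)

lemma dyw: "nc_dy_word (mw i j) w =
   (of_nat ((if w = mw (i-1) j then i else 0) + (if w = mw i (j-1) then j else 0)) :: 'a::comm_ring_1)"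
proof -
  let ?u = "mw i j"
  let ?A = "{p. p < i \<and> w = mw (i-1) j}"
  let ?B = "{p. i < p \<and> p < i + 1 + j \<and> w = mw i (j-1)}"
  have eq: "{p. p < length ?u \<and> ?u ! p = False \<and> take p ?u @ drop (Suc p) ?u = w} = ?A \<union> ?B"
  proof (intro set_eqI iffI)
    fix p assume "p \<in> {p. p < length ?u \<and> ?u ! p = False \<and> take p ?u @ drop (Suc p) ?u = w}"
    then have h: "p < i + 1 + j" "?u ! p = False" "take p ?u @ drop (Suc p) ?u = w"
      by (auto simp: len_mw)
    have "p \<noteq> i" using h(2) nth_mw_i by metis
    show "p \<in> ?A \<union> ?B"
    proof (cases "p < i")
      case True
      then show ?thesis using h del_left[of p i j] by auto
    next
      case False
      then obtain q where q: "p = i + 1 + q" using \<open>p \<noteq> i\<close> by (metis add.commute add_Suc less_imp_Suc_add linorder_neqE_nat plus_1_eq_Suc)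
      then have "q < j" using h by simp
      then show ?thesis using h del_right[of q j i] q by auto
    qed
  next
    fix p assume p: "p \<in> ?A \<union> ?B"
    show "p \<in> {p. p < length ?u \<and> ?u ! p = False \<and> take p ?u @ drop (Suc p) ?u = w}"
    proof (cases "p < i")
      case True
      then show ?thesis using p del_left[of p i j] by (auto simp: len_mw)
    next
      case False
      then have pB: "p \<in> ?B" using p by auto
      then obtain q where q: "p = i + 1 + q" by (metis add.commute add_Suc less_imp_Suc_add mem_Collect_eq plus_1_eq_Suc)
      then have "q < j" using pB by simp
      then show ?thesis using pB del_right[of q j i] q by (auto simp: len_mw)
    qed
  qed
  have cA: "card ?A = (if w = mw (i-1) j then i else 0)" by auto
  have cB: "card ?B = (if w = mw i (j-1) then j else 0)"
  proof -
    have "?B = (if w = mw i (j-1) then {i<..<i+1+j} else {})" by auto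
    then show ?thesis by simp
  qed
  have "card (?A \<union> ?B) = card ?A + card ?B"
    by (rule card_Un_disjoint) auto
  then show ?thesis unfolding nc_dy_word_def eq using cA cB by simp
qed

lemma dy_formula: "p \<in> W n \<Longrightarrow> nc_dy p w = (\<Sum>i\<le>n. p (mw i (n-i)) * (nc_dy_word (mw i (n-i)) w :: 'a::comm_ring_1))"
  unfolding nc_dy_def by (rule sum_W)

lemma Delta_formula: "p \<in> W n \<Longrightarrow> nc_Delta p w = (\<Sum>i\<le>n. p (mw i (n-i)) * (nc_eval_word sig0 (mw i (n-i)) w :: 'a::comm_ring_1)) - p w"
  unfolding nc_Delta_def nc_diff_def nc_subst_def sig0_def[symmetric] by (simp add: sum_W)

lemma hd_mwS: "hd (mw (Suc i) j) = False" by (simp add: mw_def)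
lemma tl_mwS: "tl (mw (Suc i) j) = mw i j" by (simp add: mw_def)
lemma last_mwS: "last (mw i (Suc j)) = False" by (simp add: mw_snoc)
lemma butlast_mwS: "butlast (mw i (Suc j)) = mw i j" by (simp add: mw_snoc)

lemma e_Suc_w: "nc_e (Suc n) w = (if w \<noteq> [] \<and> last w = False then nc_e n (butlast w) else 0)
    - (if w \<noteq> [] \<and> hd w = False then nc_e n (tl w) else (0::'a::comm_ring_1))"
  apply (simp only: nc_e.simps nc_diff_def mult_right_y)
  apply (simp only: nc_y_def mult_left_monom)
  done

lemma e_mw: "nc_e n (mw i j) = (if i + j = n then (-1)^i * of_nat (n choose i) else (0::'a::comm_ring_1))"
proof (induction n arbitrary: i j)
  case 0
  show ?case by (cases i; cases j) (auto simp: nc_x_def nc_monom_def mw_def)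
next
  case (Suc n)
  note IH = Suc.IH
  show ?case
  proof (cases i)
    case 0
    then show ?thesis
      apply (cases j) apply (simp_all only: e_Suc_w) by (simp_all add: hd_mw0 last_mw0 last_mwS butlast_mwS IH)
  next
    case (Suc i')
    then show ?thesis
      apply (cases j) apply (simp_all only: e_Suc_w) by (simp_all add: hd_mwS tl_mwS last_mw0 last_mwS butlast_mwS IH algebra_simps)
  qed
qed

lemma e_non: "(\<forall>k l. w \<noteq> mw k l) \<Longrightarrow> nc_e n w = (0::'a::comm_ring_1)"
proof (induction n arbitrary: w)
  case 0
  have "w \<noteq> mw 0 0" using 0 by blast
  then show ?case by (simp add: nc_x_def nc_monom_def mw_def)
next
  case (Suc n)
  have a: "nc_e n (butlast w) = (0::'a)" if "w \<noteq> []" "last w = False"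
  proof (rule Suc.IH, intro allI notI)
    fix k l assume "butlast w = mw k l"
    then have "w = mw k (Suc l)" using that by (metis append_butlast_last_id mw_snoc)
    then show False using Suc.prems by blast
  qed
  have b: "nc_e n (tl w) = (0::'a)" if "w \<noteq> []" "hd w = False"
  proof (rule Suc.IH, intro allI notI)
    fix k l assume "tl w = mw k l"
    then have "w = mw (Suc k) l" using that by (metis list.collapse mw_Suc)
    then show False using Suc.prems by blast
  qed
  show ?case using a b by (subst e_Suc_w) simp
qed

lemma choose3: "k + j + l \<le> n \<Longrightarrow>
  (n choose (k+j)) * ((k+j) choose k) * ((n-(k+j)) choose l) = (n choose k) * ((n-k) choose l) * ((n-k-l) choose j)"
proof -
  assume h: "k + j + l \<le> n"
  define N where "N = n - k"
  have 1: "(n choose (k+j)) * ((k+j) choose k) = (n choose k) * (N choose j)"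
    using choose_mult[of k "k+j" n] h unfolding N_def by simp
  have 2: "(N choose j) * ((N - j) choose l) = (N choose l) * ((N - l) choose j)"
  proof -
    have jl: "j + l \<le> N" using h unfolding N_def by simp
    have "(N choose (N-j)) * ((N-j) choose l) = (N choose l) * ((N - l) choose (N - j - l))"
      using choose_mult[of l "N-j" N] jl by simp
    moreover have "N choose (N-j) = N choose j" using jl by (simp add: binomial_symmetric[symmetric])
    moreover have "(N - l) choose (N - j - l) = (N - l) choose j"
      using jl binomial_symmetric[of j "N - l"] by (simp add: diff_commute add.commute)
    ultimately show ?thesis by simp
  qed
  have "n - (k+j) = N - j" unfolding N_def by simp
  then show ?thesis using 1 2 unfolding N_def[symmetric] by (metis mult.assoc diff_diff_left N_def)
qed

lemma ident:
  "(\<Sum>i\<le>n. (-1)^i * of_nat (n choose i) * of_nat (i choose k) * of_nat ((n-i) choose l))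
   = (if k + l = n then (-1)^k * of_nat (n choose k) else (0::'a::comm_ring_1))"
proof (cases "k + l \<le> n")
  case False
  have "\<forall>i\<in>{..n}. (-1)^i * of_nat (n choose i) * of_nat (i choose k) * of_nat ((n-i) choose l) = (0::'a)"
  proof
    fix i assume iN: "i \<in> {..n}"
    show "(-1)^i * of_nat (n choose i) * of_nat (i choose k) * of_nat ((n-i) choose l) = (0::'a)"
    proof (cases "i < k")
      case True then show ?thesis by (simp add: binomial_eq_0)
    next
      case F: False
      then have "n - i < l" using False iN by auto
      then show ?thesis by (simp add: binomial_eq_0)
    qed
  qed
  then show ?thesis using False by simp
next
  case True
  define m where "m = n - k - l"
  let ?f = "\<lambda>i. (-1)^i * of_nat (n choose i) * of_nat (i choose k) * (of_nat ((n-i) choose l) :: 'a)"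
  have "(\<Sum>i\<le>n. ?f i) = (\<Sum>i\<in>{k..k+m}. ?f i)"
  proof (rule sum.mono_neutral_right)
    show "{k..k+m} \<subseteq> {..n}" using True unfolding m_def by auto
    show "\<forall>i\<in>{..n} - {k..k+m}. ?f i = 0"
    proof
      fix i assume "i \<in> {..n} - {k..k+m}"
      then have "i < k \<or> n - i < l" using True unfolding m_def by auto
      then show "?f i = 0" by (auto simp: binomial_eq_0)
    qed
  qed simp
  also have "\<dots> = (\<Sum>j\<in>{0..m}. ?f (j + k))"
    using sum.shift_bounds_cl_nat_ivl[of ?f 0 k m] by (simp add: add.commute)
  also have "\<dots> = (\<Sum>j\<le>m. ((-1)^k * of_nat (n choose k) * of_nat ((n-k) choose l)) * ((-1)^j * of_nat (m choose j)))"
  proof (rule sum.cong)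
    fix j assume "j \<in> {..m}"
    then have "k + j + l \<le> n" using True unfolding m_def by auto
    from choose3[OF this] have "of_nat (n choose (k+j)) * of_nat ((k+j) choose k) * of_nat ((n-(k+j)) choose l) =
       (of_nat (n choose k) * of_nat ((n-k) choose l) * of_nat (m choose j) :: 'a)"
      unfolding m_def by (metis of_nat_mult)
    then show "?f (j + k) = ((-1)^k * of_nat (n choose k) * of_nat ((n-k) choose l)) * ((-1)^j * of_nat (m choose j))"
      by (simp add: power_add algebra_simps add.commute)
  qed (simp add: atLeast0AtMost)
  also have "\<dots> = ((-1)^k * of_nat (n choose k) * of_nat ((n-k) choose l)) * (\<Sum>j\<le>m. (-1)^j * of_nat (m choose j))"
    by (simp add: sum_distrib_left)
  also have "\<dots> = (if k + l = n then (-1)^k * of_nat (n choose k) else 0)"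
  proof (cases "m = 0")
    case True
    then have "k + l = n" "n - k = l" using \<open>k + l \<le> n\<close> unfolding m_def by auto
    then show ?thesis using True by simp
  next
    case False
    have z: "(\<Sum>j\<le>m. (-1)^j * of_nat (m choose j)) = (0::'a)" using False by (simp add: choose_alternating_sum)
    have "k + l \<noteq> n" using False unfolding m_def by auto
    then show ?thesis using z by simp
  qed
  finally show ?thesis .
qed

lemma W_zero: "p \<in> W n \<Longrightarrow> (\<forall>i\<le>n. w \<noteq> mw i (n - i)) \<Longrightarrow> p w = 0"
  using W_mw by blast

lemma scalar_e:
  assumes "p \<in> W n" "\<forall>i\<le>n. p (mw i (n-i)) = c * ((-1)^i * of_nat (n choose i))"
  shows "p = nc_smult c (nc_e n :: 'a::comm_ring_1 ncpoly)"
proof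
  fix w
  show "p w = nc_smult c (nc_e n) w"
  proof (cases "\<exists>k l. w = mw k l")
    case True
    then obtain k l where w: "w = mw k l" by blast
    show ?thesis
    proof (cases "k + l = n")
      case True
      then have "l = n - k" "k \<le> n" by auto
      then show ?thesis using assms(2) w True by (simp add: nc_smult_def e_mw)
    next
      case False
      have "\<forall>i\<le>n. w \<noteq> mw i (n - i)" using w False by auto
      then have "p w = 0" using W_zero[OF assms(1)] by blast
      then show ?thesis using w False by (simp add: nc_smult_def e_mw)
    qed
  next
    case False
    then have "p w = 0" using W_zero[OF assms(1)] by auto
    then show ?thesis using False by (simp add: nc_smult_def e_non)
  qed
qed

lemma scalar_e_coeff: "i \<le> n \<Longrightarrow> nc_smult c (nc_e n) (mw i (n-i)) = c * ((-1)^i * (of_nat (n choose i) :: 'a::comm_ring_1))"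
  by (simp add: nc_smult_def e_mw)

lemma dy_term: "i \<le> n \<Longrightarrow>
  (of_nat ((if mw k l = mw (i-1) (n-i) then i else 0) + (if mw k l = mw i (n-i-1) then n-i else 0)) :: 'a::comm_ring_1)
  = (if i = k+1 \<and> k + 1 + l = n then of_nat (k+1) else 0) + (if i = k \<and> k + 1 + l = n then of_nat (n-k) else 0)"
  by (cases i; cases "n = 0") auto

lemma sum_two_deltas:
  assumes "k + 1 + l = n"
  shows "(\<Sum>i\<le>n. (a i :: 'a::comm_ring_1) * ((if i = k+1 \<and> k + 1 + l = n then of_nat (k+1) else 0) + (if i = k \<and> k + 1 + l = n then of_nat (n-k) else 0)))
    = a (k+1) * of_nat (k+1) + a k * of_nat (n-k)"
proof -
  have "(\<Sum>i\<le>n. a i * ((if i = k+1 \<and> k + 1 + l = n then of_nat (k+1) else 0) + (if i = k \<and> k + 1 + l = n then of_nat (n-k) else 0)))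
     = (\<Sum>i\<le>n. (if i = k+1 then a (k+1) * of_nat (k+1) else 0) + (if i = k then a k * of_nat (n-k) else 0))"
    using assms by (intro sum.cong) auto
  also have "\<dots> = a (k+1) * of_nat (k+1) + a k * of_nat (n-k)"
    using assms by (simp add: sum.distrib)
  finally show ?thesis .
qed

lemma sum_two_deltas0:
  assumes "k + 1 + l \<noteq> n"
  shows "(\<Sum>i\<le>n. (a i :: 'a::comm_ring_1) * ((if i = k+1 \<and> k + 1 + l = n then of_nat (k+1) else 0) + (if i = k \<and> k + 1 + l = n then of_nat (n-k) else 0)))
    = 0"
  using assms by simp

lemma binom_rel: "of_nat (Suc k) * (of_nat (n choose Suc k) :: 'a::comm_ring_1) = of_nat (n - k) * of_nat (n choose k)"
proof -
  have "Suc k * (n choose Suc k) = (n - k) * (n choose k)"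
    using binomial_absorption[of k n] binomial_absorb_comp[of n k] by simp
  then show ?thesis by (metis of_nat_mult)
qed

lemma delta_dir1:
  fixes \<alpha> :: "'k::comm_ring_1 ncpoly"
  assumes W: "\<alpha> \<in> W n" and D: "nc_Delta \<alpha> = (\<lambda>_. 0)"
  shows "\<exists>c. \<alpha> = nc_smult c (nc_e n)"
proof -
  define a where "a i = \<alpha> (mw i (n-i))" for i
  define c :: 'k where "c = (-1)^n * a n"
  define t where "t i = c * ((-1)^i * of_nat (n choose i))" for i
  define d where "d i = a i - t i" for i
  have eqs: "(\<Sum>i\<le>n. a i * of_nat (i choose k)) = 0" if k: "k < n" for k
  proof -
    have z: "\<alpha> (mw k 0) = 0"
    proof (rule W_zero[OF W], intro allI impI)
      fix i assume "i \<le> n" show "mw k 0 \<noteq> mw i (n - i)" using k \<open>i \<le> n\<close> by auto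
    qed
    have "nc_Delta \<alpha> (mw k 0) = 0" using D by simp
    then have "(\<Sum>i\<le>n. a i * nc_eval_word sig0 (mw i (n-i)) (mw k 0)) = 0"
      unfolding Delta_formula[OF W] a_def using z by simp
    then show ?thesis by (simp add: ev_mw)
  qed
  have teq: "(\<Sum>i\<le>n. t i * of_nat (i choose k)) = 0" if k: "k < n" for k
  proof -
    have "(\<Sum>i\<le>n. t i * of_nat (i choose k)) = c * (\<Sum>i\<le>n. (-1)^i * of_nat (n choose i) * of_nat (i choose k) * of_nat ((n-i) choose 0))"
      unfolding t_def by (simp add: sum_distrib_left algebra_simps)
    also have "\<dots> = 0" using k by (simp only: ident) simp
    finally show ?thesis .
  qed
  have deq: "(\<Sum>i\<le>n. d i * of_nat (i choose k)) = 0" if k: "k < n" for k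
    using eqs[OF k] teq[OF k] unfolding d_def by (simp add: algebra_simps sum_subtractf)
  have dn: "d n = 0" unfolding d_def t_def c_def
    by (simp add: algebra_simps flip: power_add)
  have dz: "\<forall>k. n - k = m \<longrightarrow> k \<le> n \<longrightarrow> d k = 0" for m
  proof (induction m rule: less_induct)
    case (less m)
    show ?case
    proof (intro allI impI)
      fix k assume km: "n - k = m" and kn: "k \<le> n"
      show "d k = 0"
      proof (cases "k = n")
        case True then show ?thesis using dn by simp
      next
        case False
        then have k: "k < n" using kn by simp
        have "(\<Sum>i\<le>n. d i * of_nat (i choose k)) = d k * of_nat (k choose k) + (\<Sum>i\<in>{..n} - {k}. d i * of_nat (i choose k))"
          using kn by (simp add: sum.remove)
        also have "(\<Sum>i\<in>{..n} - {k}. d i * of_nat (i choose k)) = 0"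
        proof (rule sum.neutral, rule ballI)
          fix i assume i: "i \<in> {..n} - {k}"
          show "d i * of_nat (i choose k) = 0"
          proof (cases "i < k")
            case True then show ?thesis by (simp add: binomial_eq_0)
          next
            case False
            then have "n - i < m" "i \<le> n" using i km k by auto
            then have "d i = 0" using less.IH by blast
            then show ?thesis by simp
          qed
        qed
        finally show ?thesis using deq[OF k] by simp
      qed
    qed
  qed
  have "\<forall>i\<le>n. \<alpha> (mw i (n-i)) = c * ((-1)^i * of_nat (n choose i))"
    using dz unfolding d_def t_def a_def by auto
  then show ?thesis using scalar_e[OF W] by blast
qed

lemma delta_dir2:
  fixes \<alpha> :: "'k::comm_ring_1 ncpoly"
  assumes W: "\<alpha> \<in> W n" and E: "\<alpha> = nc_smult c (nc_e n)"
  shows "nc_Delta \<alpha> = (\<lambda>_. 0)"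
proof
  fix w
  have co: "\<alpha> (mw i (n-i)) = c * ((-1)^i * of_nat (n choose i))" if "i \<le> n" for i
    using E scalar_e_coeff[OF that] by simp
  show "nc_Delta \<alpha> w = 0"
  proof (cases "\<exists>k l. w = mw k l")
    case True
    then obtain k l where w: "w = mw k l" by blast
    have "(\<Sum>i\<le>n. \<alpha> (mw i (n-i)) * nc_eval_word sig0 (mw i (n-i)) w)
        = (\<Sum>i\<le>n. c * ((-1)^i * of_nat (n choose i) * of_nat (i choose k) * of_nat ((n-i) choose l)))"
      by (rule sum.cong) (simp_all add: co w ev_mw algebra_simps)
    also have "\<dots> = c * (if k + l = n then (-1)^k * of_nat (n choose k) else 0)"
      by (simp only: sum_distrib_left[symmetric] ident)
    also have "\<dots> = \<alpha> w" using w E by (simp add: nc_smult_def e_mw)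
    finally show ?thesis unfolding Delta_formula[OF W] by simp
  next
    case False
    then have "\<alpha> w = 0" using E by (simp add: nc_smult_def e_non)
    moreover have "nc_eval_word sig0 (mw i (n-i)) w = (0::'k)" for i using False ev_nonmw by blast
    ultimately show ?thesis unfolding Delta_formula[OF W] by simp
  qed
qed

lemma dy_dir2:
  fixes \<alpha> :: "'k::comm_ring_1 ncpoly"
  assumes W: "\<alpha> \<in> W n" and E: "\<alpha> = nc_smult c (nc_e n)"
  shows "nc_dy \<alpha> = (\<lambda>_. 0)"
proof
  fix w
  define a where "a i = \<alpha> (mw i (n-i))" for i
  have co: "a i = c * ((-1)^i * of_nat (n choose i))" if "i \<le> n" for i
    using E scalar_e_coeff[OF that] unfolding a_def by simp
  show "nc_dy \<alpha> w = 0"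
  proof (cases "\<exists>k l. w = mw k l")
    case True
    then obtain k l where w: "w = mw k l" by blast
    have "nc_dy \<alpha> w = (\<Sum>i\<le>n. a i * ((if i = k+1 \<and> k + 1 + l = n then of_nat (k+1) else 0) + (if i = k \<and> k + 1 + l = n then of_nat (n-k) else 0)))"
      unfolding dy_formula[OF W] a_def w
    proof (rule sum.cong[OF refl])
      fix i assume "i \<in> {..n}"
      then have i: "i \<le> n" by simp
      show "\<alpha> (mw i (n - i)) * nc_dy_word (mw i (n - i)) (mw k l) = \<alpha> (mw i (n - i)) *
         ((if i = k + 1 \<and> k + 1 + l = n then of_nat (k + 1) else 0) + (if i = k \<and> k + 1 + l = n then of_nat (n - k) else 0))"
        by (simp only: dyw dy_term[OF i])
    qed
    also have "\<dots> = 0"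
    proof (cases "k + 1 + l = n")
      case True
      then have "k + 1 \<le> n" "k \<le> n" by auto
      then have 1: "a (k+1) * of_nat (k+1) = - (c * (-1)^k * (of_nat (Suc k) * of_nat (n choose Suc k)))"
        using co by (simp add: algebra_simps)
      have 2: "a k * of_nat (n-k) = c * (-1)^k * (of_nat (n-k) * of_nat (n choose k))"
        using co \<open>k \<le> n\<close> by (simp add: algebra_simps del: of_nat_diff)
      show ?thesis unfolding sum_two_deltas[OF True] 1 2 binom_rel by simp
    next
      case False
      then show ?thesis by simp
    qed
    finally show ?thesis .
  next
    case False
    then have "nc_dy_word (mw i (n-i)) w = (0::'k)" for i by (simp add: dyw)
    then show ?thesis unfolding dy_formula[OF W] by simp
  qed
qed

lemma dy_dir1:
  fixes \<alpha> :: "'k::idom ncpoly"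
  assumes W: "\<alpha> \<in> W n" and D: "nc_dy \<alpha> = (\<lambda>_. 0)" and ch: "CHAR('k) = 0"
  shows "\<exists>c. \<alpha> = nc_smult c (nc_e n)"
proof -
  define a where "a i = \<alpha> (mw i (n-i))" for i
  have rec: "a (k+1) * of_nat (k+1) + a k * of_nat (n-k) = 0" if k: "k < n" for k
  proof -
    have T: "k + 1 + (n - 1 - k) = n" using k by simp
    have "nc_dy \<alpha> (mw k (n-1-k)) = (\<Sum>i\<le>n. a i * ((if i = k+1 \<and> k + 1 + (n-1-k) = n then of_nat (k+1) else 0) + (if i = k \<and> k + 1 + (n-1-k) = n then of_nat (n-k) else 0)))"
      unfolding dy_formula[OF W] a_def
    proof (rule sum.cong[OF refl])
      fix i assume "i \<in> {..n}"
      then have i: "i \<le> n" by simp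
      show "\<alpha> (mw i (n - i)) * nc_dy_word (mw i (n - i)) (mw k (n-1-k)) = \<alpha> (mw i (n - i)) *
         ((if i = k + 1 \<and> k + 1 + (n-1-k) = n then of_nat (k + 1) else 0) + (if i = k \<and> k + 1 + (n-1-k) = n then of_nat (n - k) else 0))"
        by (simp only: dyw dy_term[OF i])
    qed
    also have "\<dots> = a (k+1) * of_nat (k+1) + a k * of_nat (n-k)"
      by (rule sum_two_deltas[OF T])
    finally show ?thesis using D by simp
  qed
  have nz: "of_nat (Suc k) \<noteq> (0::'k)" for k
    using ch of_nat_eq_0_iff_char_dvd[of "Suc k", where 'a='k] by simp
  have co: "k \<le> n \<longrightarrow> a k = a 0 * ((-1)^k * of_nat (n choose k))" for k
  proof (induction k)
    case 0 then show ?case by simp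
  next
    case (Suc k)
    show ?case
    proof
      assume "Suc k \<le> n"
      then have k: "k < n" by simp
      then have ak: "a k = a 0 * ((-1)^k * of_nat (n choose k))" using Suc.IH by simp
      have "of_nat (Suc k) * a (Suc k) = - (a k * of_nat (n-k))" using rec[OF k]
        by (simp add: algebra_simps eq_neg_iff_add_eq_0 del: of_nat_diff)
      also have "\<dots> = - (a 0 * (-1)^k * (of_nat (n-k) * of_nat (n choose k)))"
        unfolding ak by (simp add: algebra_simps del: of_nat_diff)
      also have "\<dots> = - (a 0 * (-1)^k * (of_nat (Suc k) * of_nat (n choose Suc k)))"
        by (simp only: binom_rel)
      also have "\<dots> = of_nat (Suc k) * (a 0 * ((-1)^(Suc k) * of_nat (n choose Suc k)))"
        by (simp add: algebra_simps)
      finally have "of_nat (Suc k) * a (Suc k) = of_nat (Suc k) * (a 0 * ((-1)^(Suc k) * of_nat (n choose Suc k)))" .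
      then show "a (Suc k) = a 0 * ((-1)^(Suc k) * of_nat (n choose Suc k))"
        using mult_left_cancel[OF nz[of k]] by blast
    qed
  qed
  have "\<forall>i\<le>n. \<alpha> (mw i (n-i)) = a 0 * ((-1)^i * of_nat (n choose i))"
    using co unfolding a_def by auto
  then show ?thesis using scalar_e[OF W] by blast
qed

theorem proposition2p4:
  fixes \<alpha> :: "'k::idom ncpoly" and n :: nat
  assumes "infinite (UNIV :: 'k set)"
    and "\<alpha> \<in> W n"
  shows "(nc_Delta \<alpha> = (\<lambda>_. 0) \<longleftrightarrow> (\<exists>c. \<alpha> = nc_smult c (nc_e n)))
       \<and> (CHAR('k) = 0 \<longrightarrow> (nc_dy \<alpha> = (\<lambda>_. 0) \<longleftrightarrow> (\<exists>c. \<alpha> = nc_smult c (nc_e n))))"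
  using delta_dir1[OF assms(2)] delta_dir2[OF assms(2)] dy_dir1[OF assms(2)] dy_dir2[OF assms(2)]
  by blast

end
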